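(* Let $A\in\mathbb{M}_m(\mathbb{M}_n)$ be positive semidefinite. Then \[ (\mathrm{tr} A)^{mn}+\big(\det(\mathrm{tr}_1 A)\big)^m\ge m^{mn}\Big(\det A+\big(\det(\mathrm{tr}_2 A)\big)^n\Big), \] and \[ (\mathrm{tr} A)^{mn}+\big(\det(\mathrm{tr}_2 A)\big)^n\ge n^{mn}\Big(\det A+\big(\det(\mathrm{tr}_1 A)\big)^m\Big). \]
   Context: $\mathbb{M}_m(\mathbb{M}_n)$ denotes the set of $mn\times mn$ complex matrices partitioned as $A=[A_{i,j}]_{i,j=1}^m$ with each block $A_{i,j}$ an $n\times n$ complex matrix. The partial traces are $\mathrm{tr}_1 A=\sum_{i=1}^m A_{i,i}\in\mathbb{M}_n$ and $\mathrm{tr}_2 A=[\mathrm{tr}\,A_{i,j}]_{i,j=1}^m\in\mathbb{M}_m$. *)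

theory Defs
  imports "HOL-Analysis.Analysis" "HOL-Library.Complex_Order"
begin

text \<open>Block matrices in M_m(M_n) are represented as square complex matrices indexed by
  the product type 'm \<times> 'n: the entry (k,l) of block A_{i,j} is A $ (i,k) $ (j,l).\<close>

definition hermitian_mat :: "complex^'k^'k \<Rightarrow> bool" where
  "hermitian_mat A \<longleftrightarrow> (\<forall>i j. A $ i $ j = cnj (A $ j $ i))"

definition psd_mat :: "complex^'k^'k \<Rightarrow> bool" where
  "psd_mat A \<longleftrightarrow> hermitian_mat A \<and>
     (\<forall>x :: complex^'k. 0 \<le> (\<Sum>i\<in>UNIV. \<Sum>j\<in>UNIV. cnj (x $ i) * A $ i $ j * x $ j))"

text \<open>Partial traces: tr_1 A = sum of diagonal blocks (n x n), tr_2 A = [tr A_{ij}] (m x m).\<close>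

definition ptrace1 :: "complex^('m::finite \<times> 'n::finite)^('m \<times> 'n) \<Rightarrow> complex^'n^'n" where
  "ptrace1 A = (\<chi> k l. \<Sum>i\<in>UNIV. A $ (i, k) $ (i, l))"

definition ptrace2 :: "complex^('m::finite \<times> 'n::finite)^('m \<times> 'n) \<Rightarrow> complex^'m^'m" where
  "ptrace2 A = (\<chi> i j. \<Sum>k\<in>UNIV. A $ (i, k) $ (j, k))"

end

theory Submission
  imports Defs "HOL-Computational_Algebra.Fundamental_Theorem_Algebra"
begin


lemma prod_linear_coeffs:
  fixes r :: "'a \<Rightarrow> 'b::comm_ring_1"
  assumes "finite S"
  shows "coeff (\<Prod>i\<in>S. [:-r i,1:]) (card S) = 1 \<and>
         (S \<noteq> {} \<longrightarrow> coeff (\<Prod>i\<in>S. [:-r i,1:]) (card S - 1) = - (\<Sum>i\<in>S. r i))"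
  using assms
proof (induction S rule: finite_induct)
  case empty
  then show ?case by simp
next
  case (insert x F)
  let ?P = "\<Prod>i\<in>F. [:-r i,1:]"
  have eq: "(\<Prod>i\<in>insert x F. [:-r i,1:]) = smult (-r x) ?P + pCons 0 ?P"
    using insert by simp
  have deg: "degree ?P \<le> card F"
    using degree_prod_sum_le[OF insert(1), of "\<lambda>i. [:-r i,1:]"] by simp
  have c1: "coeff ?P (Suc (card F)) = 0"
    using deg by (simp add: coeff_eq_0)
  show ?case
  proof (cases "F = {}")
    case True
    then show ?thesis using insert by simp
  next
    case False
    then have "card F \<ge> 1" using insert(1) by (simp add: Suc_leI card_gt_0_iff)
    then obtain c where c: "card F = Suc c" by (cases "card F") auto
    show ?thesis using insert c c1 eq False by (simp add: algebra_simps)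
  qed
qed

definition charpoly :: "'a::comm_ring_1^'n^'n \<Rightarrow> 'a poly" where
  "charpoly M = det (\<chi> i j. if i = j then [:-M$i$j, 1:] else [:-M$i$j:])"

lemma poly_charpoly:
  "poly (charpoly M) x = det (\<chi> i j. (if i = j then x else 0) - M$i$j)"
  unfolding charpoly_def det_def poly_sum poly_prod
  apply (intro sum.cong refl) apply (simp only: poly_prod poly_mult poly_of_int) apply (intro arg_cong2[where f="(*)"] refl prod.cong) apply auto done

lemma perm_nonid_two:
  assumes p: "p permutes (UNIV::'n::finite set)" and "p \<noteq> id"
  shows "card {i. p i = i} + 2 \<le> CARD('n)"
proof -
  from assms(2) obtain a where a: "p a \<noteq> a" by (auto simp: fun_eq_iff)
  let ?b = "p a"
  have ip: "inj p" by (rule permutes_inj[OF p])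
  have "p ?b \<noteq> ?b"
  proof
    assume "p ?b = ?b"
    then have "?b = a" using ip unfolding inj_def by blast
    then show False using a by simp
  qed
  then have sub: "{a, ?b} \<subseteq> (UNIV - {i. p i = i})" using a by auto
  have "card {a, ?b} = 2" using a by simp
  then have "2 \<le> card ((UNIV - {i. p i = i}))" using card_mono[OF _ sub] by simp
  moreover have "card ((UNIV - {i. p i = i})) = CARD('n) - card {i. p i = i}"
    by (rule card_Diff_subset) auto
  moreover have "card {i. p i = i} \<le> CARD('n)" by (rule card_mono) auto
  ultimately show ?thesis by linarith
qed

lemma charpoly_coeffs:
  fixes M :: "'a::comm_ring_1^'n::finite^'n"
  shows "coeff (charpoly M) (CARD('n)) = 1"
    "coeff (charpoly M) (CARD('n) - 1) = - trace M"
    "degree (charpoly M) = CARD('n)"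
proof -
  let ?C = "(\<chi> i j. if i = j then [:-M$i$j, 1:] else [:-M$i$j:]) :: 'a poly^'n^'n"
  let ?t = "\<lambda>p. of_int (sign p) * (\<Prod>i\<in>UNIV. ?C$i$p i)"
  let ?P = "{p. p permutes (UNIV::'n set)}"
  have idP: "id \<in> ?P" by (simp add: permutes_id)
  have finP: "finite ?P" by (simp add: finite_permutations)
  have cp: "charpoly M = ?t id + (\<Sum>p\<in>?P - {id}. ?t p)"
  proof -
    have "charpoly M = (\<Sum>p\<in>?P. ?t p)" unfolding charpoly_def det_def by simp
    then show ?thesis using sum.remove[OF finP idP, of ?t] by simp
  qed
  have tid: "?t id = (\<Prod>i\<in>UNIV. [:-M$i$i, 1:])" by simp
  have degt: "degree (?t p) + 2 \<le> CARD('n)" if "p \<in> ?P - {id}" for p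
  proof -
    have "degree (?t p) \<le> degree (of_int (sign p) :: 'a poly) + degree (\<Prod>i\<in>UNIV. ?C$i$p i)"
      by (rule degree_mult_le)
    also have "\<dots> \<le> (\<Sum>i\<in>UNIV. degree (?C$i$p i))"
      using degree_prod_sum_le[of UNIV "\<lambda>i. ?C$i$p i"] by (simp add: o_def)
    also have "\<dots> = (\<Sum>i\<in>UNIV. if p i = i then 1 else 0)"
      by (intro sum.cong refl) auto
    also have "\<dots> = card {i. p i = i}"
      by (simp add: sum.If_cases)
    finally show ?thesis using perm_nonid_two[of p] that by simp
  qed
  have N1: "CARD('n) \<ge> 1" by (simp add: Suc_leI)
  have crest: "coeff (\<Sum>p\<in>?P - {id}. ?t p) k = 0" if "k + 1 \<ge> CARD('n)" for k
    unfolding coeff_sum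
    by (intro sum.neutral ballI coeff_eq_0) (use degt that in fastforce)
  have pl: "coeff (\<Prod>i\<in>UNIV. [:-M$i$i, 1:]) (CARD('n)) = 1 \<and>
         coeff (\<Prod>i\<in>UNIV. [:-M$i$i, 1:]) (CARD('n) - 1) = - (\<Sum>i\<in>UNIV. M$i$i)"
    using prod_linear_coeffs[of "UNIV::'n set" "\<lambda>i. M$i$i"] by simp
  show c1: "coeff (charpoly M) (CARD('n)) = 1"
    unfolding cp coeff_add tid using pl crest[of "CARD('n)"] by simp
  show "coeff (charpoly M) (CARD('n) - 1) = - trace M"
    unfolding cp coeff_add tid trace_def using pl crest[of "CARD('n) - 1"] N1 by simp
  have "degree (charpoly M) \<le> CARD('n)"
    unfolding cp
  proof (rule degree_add_le)
    show "degree (?t id) \<le> CARD('n)" unfolding tid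
      using degree_prod_sum_le[of UNIV "\<lambda>i. [:-M$i$i, 1:]"] by simp
    show "degree (\<Sum>p\<in>?P - {id}. ?t p) \<le> CARD('n)"
      by (rule degree_sum_le) (use degt finP in fastforce)+
  qed
  then show "degree (charpoly M) = CARD('n)"
    using le_degree[of "charpoly M" "CARD('n)"] c1 by simp
qed



lemma det_neg_entries:
  "det (\<chi> i j. - M$i$j) = (-1)^CARD('n) * det (M::'a::comm_ring_1^'n::finite^'n)"
  unfolding det_def by (simp add: prod_uminus sum_distrib_left mult_ac)

lemma det_kernel:
  fixes A :: "'a::field^'n::finite^'n"
  shows "det A = 0 \<longleftrightarrow> (\<exists>x. x \<noteq> 0 \<and> A *v x = 0)"
  using invertible_det_nz[of A] invertible_left_inverse[of A] matrix_left_invertible_ker[of A]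
  by blast

lemma shift_mat_mult:
  fixes M :: "'a::comm_ring_1^'n::finite^'n"
  shows "(\<chi> a b. (if a = b then c else 0) - M$a$b) *v x = c *s x - M *v x"
proof -
  have "((\<chi> a b. (if a = b then c else 0) - M$a$b) *v x) $ i = (c *s x - M *v x) $ i" for i
  proof -
    have "((\<chi> a b. (if a = b then c else 0) - M$a$b) *v x) $ i
        = (\<Sum>j\<in>UNIV. (if i = j then c else 0) * x$j) - (\<Sum>j\<in>UNIV. M$i$j * x$j)"
      unfolding matrix_vector_mult_def
      by (simp add: left_diff_distrib sum_subtractf)
    also have "(\<Sum>j\<in>UNIV. (if i = j then c else 0) * x$j) = (\<Sum>j\<in>UNIV. if i = j then c * x$j else 0)"
      by (intro sum.cong) auto
    also have "\<dots> = c * x$i" by simp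
    also have "c * x$i - (\<Sum>j\<in>UNIV. M$i$j * x$j) = (c *s x - M *v x) $ i"
      by (simp add: matrix_vector_mult_def)
    finally show ?thesis .
  qed
  then show ?thesis by (simp add: vec_eq_iff)
qed

lemma charpoly_roots:
  fixes M :: "complex^'n::finite^'n"
  obtains r where "det M = (\<Prod>i<CARD('n). r i)" "trace M = (\<Sum>i<CARD('n). r i)"
    "\<And>i. i < CARD('n) \<Longrightarrow> \<exists>v. v \<noteq> 0 \<and> M *v v = r i *s v"
proof -
  let ?p = "charpoly M"
  let ?N = "CARD('n)"
  obtain root where fac: "smult (lead_coeff ?p) (\<Prod>i<degree ?p. [:-root i,1:]) = ?p"
    by (rule complex_poly_decompose')
  have lc: "lead_coeff ?p = 1" using charpoly_coeffs[of M] by simp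
  have p: "?p = (\<Prod>i<?N. [:-root i,1:])" using fac lc charpoly_coeffs(3)[of M] by simp
  have N1: "?N \<ge> 1" by (simp add: Suc_leI)
  have "poly ?p 0 = det (\<chi> i j. - M$i$j)" unfolding poly_charpoly
    by (intro arg_cong[where f=det]) (simp add: vec_eq_iff)
  also have "\<dots> = (-1)^?N * det M" by (rule det_neg_entries)
  finally have e1: "poly ?p 0 = (-1)^?N * det M" .
  have e2: "poly ?p 0 = (-1)^?N * (\<Prod>i<?N. root i)"
    unfolding p poly_prod by (simp add: prod_uminus)
  have "det M = (\<Prod>i<?N. root i)"
  proof -
    have "((-1::complex)^?N) * ((-1)^?N) = 1" by (simp add: power_mult_distrib[symmetric])
    then show ?thesis using e1 e2 by (metis mult.assoc mult_1)
  qed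
  moreover have "trace M = (\<Sum>i<?N. root i)"
  proof -
    have "coeff ?p (?N - 1) = - (\<Sum>i<?N. root i)"
      unfolding p using prod_linear_coeffs[of "{..<?N}" root] N1 by auto
    then show ?thesis using charpoly_coeffs(2)[of M] by simp
  qed
  moreover have "\<exists>v. v \<noteq> 0 \<and> M *v v = root i *s v" if i: "i < ?N" for i
  proof -
    have "poly ?p (root i) = 0" unfolding p poly_prod
      using i by (intro prod_zero[of "{..<?N}"]) (auto intro!: bexI[of _ i])
    then have "det (\<chi> a b. (if a = b then root i else 0) - M$a$b) = 0"
      by (simp add: poly_charpoly)
    then obtain v where v: "v \<noteq> 0" "(\<chi> a b. (if a = b then root i else 0) - M$a$b) *v v = 0"
      using det_kernel by blast
    then show ?thesis unfolding shift_mat_mult by (auto intro!: exI[of _ v])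
  qed
  ultimately show ?thesis using that by blast
qed

lemma amgm_pow:
  fixes x :: "nat \<Rightarrow> real"
  assumes "N \<ge> 1" "\<And>i. i < N \<Longrightarrow> 0 \<le> x i"
  shows "real N ^ N * (\<Prod>i<N. x i) \<le> (\<Sum>i<N. x i) ^ N"
proof -
  have fin: "finite {..<N}" by simp
  have ne: "{..<N} \<noteq> {}" using assms(1) by (simp add: lessThan_empty_iff)
  have "(\<Prod>i<N. x i) powr (1 / N) \<le> (\<Sum>i<N. x i / N)"
    using arith_geom_mean[OF fin ne, of x] assms by simp
  also have "\<dots> = (\<Sum>i<N. x i) / N" by (simp add: sum_divide_distrib)
  finally have h: "(\<Prod>i<N. x i) powr (1 / N) \<le> (\<Sum>i<N. x i) / N" .
  have P0: "0 \<le> (\<Prod>i<N. x i)" using assms by (intro prod_nonneg) auto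
  have "(\<Prod>i<N. x i) = ((\<Prod>i<N. x i) powr (1 / N)) ^ N"
  proof (cases "(\<Prod>i<N. x i) = 0")
    case True
    then show ?thesis using assms(1) by (simp only: True) simp
  next
    case False
    then have pos: "0 < (\<Prod>i<N. x i)" using P0 by (simp only: order_less_le) simp
    have "((\<Prod>i<N. x i) powr (1 / N)) ^ N = ((\<Prod>i<N. x i) powr (1 / N)) powr (real N)"
    proof -
      have "0 < (\<Prod>i<N. x i) powr (1 / N)" using pos by (simp only: powr_gt_zero)
      then show ?thesis by (rule powr_realpow[symmetric])
    qed
    also have "\<dots> = (\<Prod>i<N. x i)" using assms(1) P0 by (simp add: powr_powr)
    finally show ?thesis by simp
  qed
  also have "\<dots> \<le> ((\<Sum>i<N. x i) / N) ^ N"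
    by (rule power_mono[OF h]) simp
  finally have "(\<Prod>i<N. x i) \<le> ((\<Sum>i<N. x i) / N) ^ N" .
  then have "real N ^ N * (\<Prod>i<N. x i) \<le> real N ^ N * ((\<Sum>i<N. x i) / N) ^ N"
    by (simp add: mult_left_mono)
  also have "\<dots> = (\<Sum>i<N. x i) ^ N" using assms(1)
    by (simp add: power_divide)
  finally show ?thesis .
qed

lemma eig_amgm:
  fixes M :: "complex^'n::finite^'n"
  assumes ev: "\<And>a v. v \<noteq> 0 \<Longrightarrow> M *v v = a *s v \<Longrightarrow> a \<in> \<real> \<and> 0 \<le> Re a"
  obtains d t :: real where "det M = of_real d" "trace M = of_real t" "0 \<le> d" "0 \<le> t"
    "real CARD('n) ^ CARD('n) * d \<le> t ^ CARD('n)"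
proof -
  obtain r where r: "det M = (\<Prod>i<CARD('n). r i)" "trace M = (\<Sum>i<CARD('n). r i)"
    "\<And>i. i < CARD('n) \<Longrightarrow> \<exists>v. v \<noteq> 0 \<and> M *v v = r i *s v"
    using charpoly_roots[of M] by blast
  have rr: "r i \<in> \<real> \<and> 0 \<le> Re (r i)" if "i < CARD('n)" for i
    using r(3)[OF that] ev by blast
  define x where "x i = Re (r i)" for i
  have rx: "r i = of_real (x i)" if "i < CARD('n)" for i
    using rr[OF that] unfolding x_def by (simp add: of_real_Re)
  have d: "det M = of_real (\<Prod>i<CARD('n). x i)"
    unfolding r(1) of_real_prod by (intro prod.cong) (auto simp: rx)
  have t: "trace M = of_real (\<Sum>i<CARD('n). x i)"
    unfolding r(2) of_real_sum by (intro sum.cong) (auto simp: rx)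
  have x0: "\<And>i. i < CARD('n) \<Longrightarrow> 0 \<le> x i" using rr unfolding x_def by blast
  show ?thesis
    apply (rule that[OF d t])
    using x0 amgm_pow[of "CARD('n)" x] by (auto intro!: prod_nonneg sum_nonneg simp: Suc_leI)
qed



definition sesq :: "complex^'n^'n \<Rightarrow> complex^'n \<Rightarrow> complex^'n \<Rightarrow> complex" where
  "sesq B x y = (\<Sum>i\<in>UNIV. \<Sum>j\<in>UNIV. cnj (x$i) * B$i$j * y$j)"

lemma psd_sesq: "psd_mat B \<longleftrightarrow> hermitian_mat B \<and> (\<forall>x. 0 \<le> sesq B x x)"
  unfolding psd_mat_def sesq_def by simp

lemma sesq_mv: "sesq B x y = (\<Sum>i\<in>UNIV. cnj (x$i) * (B *v y)$i)"
  unfolding sesq_def matrix_vector_mult_def by (simp add: sum_distrib_left mult.assoc)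

lemma sesq_expand:
  "sesq B (v - c *s w) (v - c *s w) =
     sesq B v v - cnj c * sesq B w v - c * sesq B v w + cnj c * c * sesq B w w"
  unfolding sesq_def
  by (simp add: algebra_simps sum_subtractf sum.distrib sum_distrib_left)

lemma sesq_herm:
  assumes "hermitian_mat B"
  shows "sesq B v w = cnj (sesq B w v)"
proof -
  have h: "\<And>i j. cnj (B$i$j) = B$j$i" using assms unfolding hermitian_mat_def
    by (metis complex_cnj_cnj)
  have "cnj (sesq B w v) = (\<Sum>i\<in>UNIV. \<Sum>j\<in>UNIV. w$i * B$j$i * cnj (v$j))"
    unfolding sesq_def by (simp add: cnj_sum h)
  also have "\<dots> = (\<Sum>j\<in>UNIV. \<Sum>i\<in>UNIV. w$i * B$j$i * cnj (v$j))"
    by (rule sum.swap)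
  also have "\<dots> = sesq B v w"
    unfolding sesq_def by (simp add: mult_ac)
  finally show ?thesis by simp
qed

lemma sesq_self_id: "sesq (mat 1) w w = of_real (\<Sum>i\<in>UNIV. (cmod (w$i))^2)"
  unfolding sesq_mv of_real_sum matrix_vector_mul_lid
  by (intro sum.cong refl) (metis complex_norm_square mult.commute)

lemma sum_cmod_zero:
  "(\<Sum>i\<in>UNIV. (cmod ((w::complex^'n)$i))^2) = 0 \<Longrightarrow> w = 0"
  by (subst (asm) sum_nonneg_eq_0_iff) (auto simp: vec_eq_iff)

lemma sesq_Bv: "sesq B w v = sesq (mat 1) w w" if "w = B *v v"
  unfolding sesq_mv that by simp

lemma psd_kernel:
  assumes psd: "psd_mat B" and z: "sesq B v v = 0"
  shows "B *v v = 0"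
proof -
  let ?w = "B *v v"
  have herm: "hermitian_mat B" and nn: "\<And>x. 0 \<le> sesq B x x" using psd by (auto simp: psd_sesq)
  define s where "s = (\<Sum>i\<in>UNIV. (cmod (?w$i))^2)"
  have s0: "0 \<le> s" unfolding s_def by (simp add: sum_nonneg)
  have wv: "sesq B ?w v = of_real s" unfolding s_def using sesq_Bv[of ?w B v] sesq_self_id by simp
  have vw: "sesq B v ?w = of_real s" using sesq_herm[OF herm, of v ?w] wv by simp
  obtain q where q: "sesq B ?w ?w = of_real q" "0 \<le> q"
    using nn[of ?w] by (metis complex_is_Real_iff less_eq_complex_def of_real_Re zero_complex.simps(1,2))
  have "s = 0"
  proof (rule ccontr)
    assume "s \<noteq> 0"
    then have sp: "0 < s" using s0 by simp
    define t where "t = s / (q + 1)"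
    have e: "sesq B (v - of_real t *s ?w) (v - of_real t *s ?w) = of_real (- 2 * t * s + t * t * q)"
      unfolding sesq_expand z wv vw q(1) by simp
    have "0 \<le> - 2 * t * s + t * t * q"
      using nn[of "v - of_real t *s ?w"] unfolding e by (simp add: less_eq_complex_def)
    moreover have "- 2 * t * s + t * t * q < 0"
    proof -
      have q1: "0 < q + 1" using q(2) by simp
      have "t * q = s * (q / (q + 1))" unfolding t_def by simp
      also have "\<dots> < s * 2" using sp q1 q(2) by (intro mult_strict_left_mono) (auto simp: field_simps)
      finally have "t * q < 2 * s" by simp
      moreover have "0 < t" unfolding t_def using sp q1 by simp
      ultimately have "t * (t * q) < t * (2 * s)" by simp
      then show ?thesis by (simp add: algebra_simps)
    qed
    ultimately show False by simp
  qed
  then show ?thesis using sum_cmod_zero unfolding s_def by blast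
qed

lemma gen_eig_nonneg:
  assumes A: "0 \<le> sesq A v v" and T: "sesq T v v = of_real r" "0 < r"
    and eq: "A *v v = a *s (T *v v)"
  shows "a \<in> \<real> \<and> 0 \<le> Re a"
proof -
  have "sesq A v v = a * sesq T v v"
    unfolding sesq_mv eq by (simp add: sum_distrib_left mult_ac)
  then have "a = sesq A v v / of_real r" using T by simp
  moreover obtain u where "sesq A v v = of_real u" "0 \<le> u"
    using A by (metis complex_is_Real_iff less_eq_complex_def of_real_Re zero_complex.simps(1,2))
  ultimately have "a = of_real (u / r)" by simp
  then show ?thesis using T \<open>0 \<le> u\<close> by simp
qed

lemma psd_eig_amgm:
  fixes B :: "complex^'n::finite^'n"
  assumes "psd_mat B"
  obtains d t :: real where "det B = of_real d" "trace B = of_real t" "0 \<le> d" "0 \<le> t"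
    "real CARD('n) ^ CARD('n) * d \<le> t ^ CARD('n)"
proof (rule eig_amgm)
  fix a v assume v: "v \<noteq> (0::complex^'n)" and eq: "B *v v = a *s v"
  define r where "r = (\<Sum>i\<in>UNIV. (cmod (v$i))^2)"
  have "r \<noteq> 0" using sum_cmod_zero[of v] v unfolding r_def by blast
  then have "0 < r" unfolding r_def by (simp add: order_less_le sum_nonneg)
  moreover have "sesq (mat 1) v v = of_real r" unfolding r_def by (rule sesq_self_id)
  moreover have "B *v v = a *s (mat 1 *v v)" using eq by simp
  ultimately show "a \<in> \<real> \<and> 0 \<le> Re a"
    using gen_eig_nonneg[of B v "mat 1" r a] assms by (auto simp: psd_sesq)
qed (use that in blast)+



lemma sum_pair: "(\<Sum>z\<in>(UNIV::('a::finite \<times> 'b::finite) set). f z) = (\<Sum>j\<in>UNIV. \<Sum>l\<in>UNIV. f (j,l))"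
  unfolding sum.cartesian_product UNIV_Times_UNIV by (simp add: split_def)

lemma prod_pair: "(\<Prod>z\<in>(UNIV::('a::finite \<times> 'b::finite) set). f z) = (\<Prod>j\<in>UNIV. \<Prod>l\<in>UNIV. f (j,l))"
  unfolding prod.cartesian_product UNIV_Times_UNIV by (simp add: split_def)

lemma sum_delta_fst:
  "(\<Sum>z\<in>(UNIV::('a::finite \<times> 'b::finite) set). if fst z = i then f (snd z) else 0) = (\<Sum>l\<in>UNIV. f l)"
  unfolding sum_pair by (subst sum.swap) simp

definition kron1 :: "complex^'n^'n \<Rightarrow> complex^('m::finite \<times> 'n::finite)^('m \<times> 'n)" where
  "kron1 S = (\<chi> x y. if fst x = fst y then S $ snd x $ snd y else 0)"

definition emb :: "'m \<Rightarrow> complex^'n \<Rightarrow> complex^('m::finite \<times> 'n::finite)" where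
  "emb i v = (\<chi> x. if fst x = i then v $ snd x else 0)"

definition blk :: "complex^('m::finite \<times> 'n::finite) \<Rightarrow> 'm \<Rightarrow> complex^'n" where
  "blk v i = (\<chi> k. v $ (i, k))"

lemma kron1_mult: "(kron1 S ** kron1 S' :: complex^('m::finite \<times> 'n::finite)^('m \<times> 'n)) = kron1 (S ** S')"
proof -
  have "(kron1 S ** kron1 S' :: complex^('m \<times> 'n)^('m \<times> 'n)) $ x $ y = kron1 (S ** S') $ x $ y" for x y
  proof -
    have "(kron1 S ** kron1 S' :: complex^('m \<times> 'n)^('m \<times> 'n)) $ x $ y
       = (\<Sum>z\<in>UNIV. if fst z = fst x then S $ snd x $ snd z * (if fst x = fst y then S' $ snd z $ snd y else 0) else 0)"
      by (auto intro!: sum.cong simp: matrix_matrix_mult_def kron1_def)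
    also have "\<dots> = (\<Sum>l\<in>UNIV. S $ snd x $ l * (if fst x = fst y then S' $ l $ snd y else 0))"
      by (rule sum_delta_fst)
    also have "\<dots> = kron1 (S ** S') $ x $ y"
      unfolding kron1_def matrix_matrix_mult_def by auto
    finally show ?thesis .
  qed
  then show ?thesis by (simp add: vec_eq_iff)
qed

lemma kron1_one: "(kron1 (mat 1) :: complex^('m::finite \<times> 'n::finite)^('m \<times> 'n)) = mat 1"
  unfolding kron1_def by (auto simp: vec_eq_iff mat_def prod_eq_iff)

lemma sesq_kron1: "sesq (kron1 S :: complex^('m::finite \<times> 'n::finite)^('m \<times> 'n)) v v = (\<Sum>i\<in>UNIV. sesq S (blk v i) (blk v i))"
proof -
  have "sesq (kron1 S :: complex^('m \<times> 'n)^('m \<times> 'n)) v v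
      = (\<Sum>x\<in>UNIV. \<Sum>l\<in>UNIV. cnj (v$x) * S $ snd x $ l * v $ (fst x, l))"
    unfolding sesq_def
  proof (intro sum.cong refl)
    fix x :: "'m \<times> 'n"
    have "(\<Sum>y\<in>UNIV. cnj (v$x) * kron1 S $ x $ y * v $ y)
        = (\<Sum>y\<in>UNIV. if fst y = fst x then cnj (v$x) * S $ snd x $ snd y * v $ (fst x, snd y) else 0)"
      unfolding kron1_def by (intro sum.cong) auto
    also have "\<dots> = (\<Sum>l\<in>UNIV. cnj (v$x) * S $ snd x $ l * v $ (fst x, l))"
      by (rule sum_delta_fst)
    finally show "(\<Sum>y\<in>UNIV. cnj (v$x) * kron1 S $ x $ y * v $ y) = \<dots>" .
  qed
  also have "\<dots> = (\<Sum>i\<in>UNIV. sesq S (blk v i) (blk v i))"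
    unfolding sum_pair sesq_def blk_def by simp
  finally show ?thesis .
qed

lemma sesq_ptrace1:
  fixes A :: "complex^('m::finite \<times> 'n::finite)^('m \<times> 'n)"
  shows "sesq (ptrace1 A) v v = (\<Sum>i\<in>UNIV. sesq A (emb i v) (emb i v))"
proof -
  have e: "sesq A (emb i v) (emb i v) = (\<Sum>k\<in>UNIV. \<Sum>l\<in>UNIV. cnj (v$k) * A $ (i,k) $ (i,l) * v $ l)" for i
  proof -
    have "sesq A (emb i v) (emb i v) = (\<Sum>x\<in>UNIV. if fst x = i then (\<Sum>l\<in>UNIV. cnj (v$snd x) * A $ x $ (i,l) * v $ l) else 0)"
      unfolding sesq_def
    proof (intro sum.cong refl)
      fix x :: "'m \<times> 'n"
      have "(\<Sum>y\<in>UNIV. cnj (emb i v $ x) * A $ x $ y * emb i v $ y)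
          = (\<Sum>y\<in>UNIV. if fst y = i then cnj (emb i v $ x) * A $ x $ (i, snd y) * v $ snd y else 0)"
        unfolding emb_def by (intro sum.cong) auto
      also have "\<dots> = (\<Sum>l\<in>UNIV. cnj (emb i v $ x) * A $ x $ (i, l) * v $ l)"
        by (rule sum_delta_fst)
      finally show "(\<Sum>y\<in>UNIV. cnj (emb i v $ x) * A $ x $ y * emb i v $ y) =
         (if fst x = i then (\<Sum>l\<in>UNIV. cnj (v$snd x) * A $ x $ (i,l) * v $ l) else 0)"
        by (auto simp: emb_def)
    qed
    also have "\<dots> = (\<Sum>k\<in>UNIV. \<Sum>l\<in>UNIV. cnj (v$k) * A $ (i,k) $ (i,l) * v $ l)"
      by (subst sum_delta_fst[of i "\<lambda>k. \<Sum>l\<in>UNIV. cnj (v$k) * A $ (i,k) $ (i,l) * v $ l", symmetric]) (intro sum.cong refl, auto)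
    finally show ?thesis .
  qed
  have "(\<Sum>i\<in>UNIV. sesq A (emb i v) (emb i v)) = (\<Sum>i\<in>UNIV. \<Sum>k\<in>UNIV. \<Sum>l\<in>UNIV. cnj (v$k) * A $ (i,k) $ (i,l) * v $ l)"
    by (simp add: e)
  also have "\<dots> = (\<Sum>k\<in>UNIV. \<Sum>i\<in>UNIV. \<Sum>l\<in>UNIV. cnj (v$k) * A $ (i,k) $ (i,l) * v $ l)"
    by (rule sum.swap)
  also have "\<dots> = (\<Sum>k\<in>UNIV. \<Sum>l\<in>UNIV. \<Sum>i\<in>UNIV. cnj (v$k) * A $ (i,k) $ (i,l) * v $ l)"
    by (intro sum.cong refl sum.swap)
  also have "\<dots> = sesq (ptrace1 A) v v"
    unfolding sesq_def ptrace1_def by (simp add: sum_distrib_left sum_distrib_right)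
  finally show ?thesis by simp
qed

lemma trace_kron1: "trace ((kron1 S' :: complex^('m::finite \<times> 'n::finite)^('m \<times> 'n)) ** A) = trace (S' ** ptrace1 A)"
proof -
  have "trace ((kron1 S' :: complex^('m \<times> 'n)^('m \<times> 'n)) ** A) = (\<Sum>x\<in>UNIV. \<Sum>l\<in>UNIV. S' $ snd x $ l * A $ (fst x, l) $ x)"
    unfolding trace_def
  proof (intro sum.cong refl)
    fix x :: "'m \<times> 'n"
    have "((kron1 S' :: complex^('m \<times> 'n)^('m \<times> 'n)) ** A) $ x $ x
       = (\<Sum>z\<in>UNIV. if fst z = fst x then S' $ snd x $ snd z * A $ (fst x, snd z) $ x else 0)"
      by (auto intro!: sum.cong simp: matrix_matrix_mult_def kron1_def)
    also have "\<dots> = (\<Sum>l\<in>UNIV. S' $ snd x $ l * A $ (fst x, l) $ x)" by (rule sum_delta_fst)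
    finally show "((kron1 S' :: complex^('m \<times> 'n)^('m \<times> 'n)) ** A) $ x $ x = \<dots>" .
  qed
  also have "\<dots> = (\<Sum>i\<in>UNIV. \<Sum>k\<in>UNIV. \<Sum>l\<in>UNIV. S' $ k $ l * A $ (i, l) $ (i, k))"
    unfolding sum_pair by simp
  also have "\<dots> = (\<Sum>k\<in>UNIV. \<Sum>i\<in>UNIV. \<Sum>l\<in>UNIV. S' $ k $ l * A $ (i, l) $ (i, k))"
    by (rule sum.swap)
  also have "\<dots> = (\<Sum>k\<in>UNIV. \<Sum>l\<in>UNIV. \<Sum>i\<in>UNIV. S' $ k $ l * A $ (i, l) $ (i, k))"
    by (intro sum.cong refl sum.swap)
  also have "\<dots> = trace (S' ** ptrace1 A)"
    unfolding trace_def matrix_matrix_mult_def ptrace1_def by (simp add: sum_distrib_left)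
  finally show ?thesis .
qed

lemma herm_ptrace1:
  assumes "hermitian_mat A"
  shows "hermitian_mat (ptrace1 A)"
proof -
  have h: "\<And>x y. cnj (A$x$y) = A$y$x" using assms unfolding hermitian_mat_def
    by (metis complex_cnj_cnj)
  show ?thesis unfolding hermitian_mat_def ptrace1_def by (simp add: cnj_sum h)
qed

lemma psd_ptrace1:
  assumes "psd_mat A"
  shows "psd_mat (ptrace1 A)"
proof -
  have "hermitian_mat A" using assms by (simp add: psd_sesq)
  moreover have "0 \<le> sesq (ptrace1 A) x x" for x
    unfolding sesq_ptrace1 using assms by (intro sum_nonneg) (simp add: psd_sesq)
  ultimately show ?thesis by (simp add: psd_sesq herm_ptrace1)
qed

lemma trace_ptrace1: "trace (ptrace1 A) = trace A"
proof -
  have "trace (ptrace1 A) = (\<Sum>k\<in>UNIV. \<Sum>i\<in>UNIV. A $ (i,k) $ (i,k))"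
    unfolding trace_def ptrace1_def by simp
  also have "\<dots> = (\<Sum>i\<in>UNIV. \<Sum>k\<in>UNIV. A $ (i,k) $ (i,k))" by (rule sum.swap)
  also have "\<dots> = trace A" unfolding trace_def sum_pair by simp
  finally show ?thesis .
qed

lemma emb_zero:
  assumes "emb i v = 0"
  shows "v = 0"
proof -
  have "v $ k = 0" for k
  proof -
    have "emb i v $ (i, k) = 0" using assms by simp
    then show ?thesis unfolding emb_def by simp
  qed
  then show ?thesis by (simp add: vec_eq_iff)
qed

lemma blk_zero: "(\<And>i. blk v i = 0) \<Longrightarrow> v = 0"
  unfolding blk_def by (auto simp: vec_eq_iff)



definition liftp :: "'m \<Rightarrow> ('n \<Rightarrow> 'n) \<Rightarrow> ('m \<times> 'n \<Rightarrow> 'm \<times> 'n)" where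
  "liftp i q x = (if fst x = i then (i, q (snd x)) else x)"

lemma liftp_comp: "liftp i (q \<circ> q') = liftp i q \<circ> liftp i q'"
  unfolding liftp_def by (auto simp: fun_eq_iff)

lemma liftp_id: "liftp i id = id"
  unfolding liftp_def by (auto simp: fun_eq_iff)

lemma liftp_perm:
  assumes "q permutes (UNIV::'n::finite set)"
  shows "liftp (i::'m::finite) q permutes UNIV"
proof -
  have b: "bij q" using assms by (simp add: permutes_altdef)
  have c1: "q \<circ> inv q = id" using b surj_iff bij_is_surj by blast
  have c2: "inv q \<circ> q = id" using b inj_iff bij_is_inj by blast
  have "liftp i q \<circ> liftp i (inv q) = id" "liftp i (inv q) \<circ> liftp i q = id"
    unfolding liftp_comp[symmetric] c1 c2 liftp_id by simp_all
  then have "bij (liftp i q)" by (metis o_bij)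
  then show ?thesis by (simp add: permutes_altdef)
qed

lemma liftp_transpose:
  "liftp i (Transposition.transpose a b) = Transposition.transpose (i, a) (i, b)"
  unfolding liftp_def by (auto simp: fun_eq_iff Transposition.transpose_def)

lemma sign_liftp:
  assumes "q permutes (UNIV::'n::finite set)"
  shows "sign (liftp (i::'m::finite) q) = sign q"
proof -
  have fin: "finite (UNIV::'n set)" by simp
  show ?thesis using assms fin
proof (induction rule: permutes_induct)
  case id
  show ?case by (simp only: liftp_id sign_id)
next
  case (swap a b p)
  have pl: "permutation (liftp i p)"
    using liftp_perm[OF swap(4), of i] by (auto simp: permutation_permutes)
  have pp: "permutation p" using swap(4) by (auto simp: permutation_permutes)
  have "sign (liftp i (Transposition.transpose a b \<circ> p))
      = sign (Transposition.transpose (i, a) (i, b) \<circ> liftp i p)"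
    by (simp add: liftp_comp liftp_transpose)
  also have "\<dots> = - sign (liftp i p)"
    using swap(3) by (simp add: sign_compose pl permutation_swap_id sign_swap_id)
  also have "\<dots> = sign (Transposition.transpose a b \<circ> p)"
    using swap(3,5) by (simp add: sign_compose pp permutation_swap_id sign_swap_id)
  finally show ?case .
qed
qed

definition Emat :: "'m \<Rightarrow> complex^'n^'n \<Rightarrow> complex^('m::finite \<times> 'n::finite)^('m \<times> 'n)" where
  "Emat i S = (\<chi> x y. if fst x = i \<and> fst y = i then S $ snd x $ snd y else (if x = y then 1 else 0))"

lemma Emat_prod_lift:
  assumes "q permutes (UNIV::'n::finite set)"
  shows "(\<Prod>x\<in>UNIV. Emat (i::'m::finite) S $ x $ liftp i q x) = (\<Prod>k\<in>UNIV. S $ k $ q k)"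
proof -
  have "(\<Prod>x\<in>UNIV. Emat i S $ x $ liftp i q x) = (\<Prod>j\<in>UNIV. \<Prod>l\<in>UNIV. Emat i S $ (j,l) $ liftp i q (j,l))"
    by (rule prod_pair)
  also have "\<dots> = (\<Prod>j\<in>UNIV. if j = i then (\<Prod>l\<in>UNIV. S $ l $ q l) else 1)"
    by (intro prod.cong refl) (auto simp: Emat_def liftp_def)
  also have "\<dots> = (\<Prod>k\<in>UNIV. S $ k $ q k)" by simp
  finally show ?thesis .
qed

lemma Emat_nonzero_lift:
  fixes p :: "'m::finite \<times> 'n::finite \<Rightarrow> 'm \<times> 'n"
  assumes p: "p permutes UNIV" and nz: "(\<Prod>x\<in>UNIV. Emat i S $ x $ p x) \<noteq> 0"
  shows "p \<in> liftp i ` {q. q permutes UNIV}"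
proof -
  have e: "Emat i S $ x $ p x \<noteq> 0" for x
  proof
    assume "Emat i S $ x $ p x = 0"
    have "(\<Prod>x\<in>UNIV. Emat i S $ x $ p x) = 0"
    proof (rule prod_zero)
      show "finite (UNIV::('m \<times> 'n) set)" by simp
    qed (use \<open>Emat i S $ x $ p x = 0\<close> in blast)
    then show False using nz by simp
  qed
  have fix_other: "p x = x" if "fst x \<noteq> i" for x
    using e[of x] that unfolding Emat_def by (auto split: if_splits)
  have stay: "fst (p x) = i" if "fst x = i" for x
  proof (rule ccontr)
    assume "fst (p x) \<noteq> i"
    then have "p x \<noteq> x" using that by auto
    then show False using e[of x] that \<open>fst (p x) \<noteq> i\<close> unfolding Emat_def by auto
  qed
  define q where "q k = snd (p (i, k))" for k
  have pl: "p = liftp i q"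
  proof
    fix x show "p x = liftp i q x"
      using fix_other[of x] stay[of x] unfolding liftp_def q_def
      by (cases x) (auto simp: prod_eq_iff)
  qed
  have "inj q"
  proof
    fix k k' assume "q k = q k'"
    then have "p (i,k) = p (i,k')" using pl unfolding liftp_def by simp
    then show "k = k'" using permutes_inj[OF p] by (auto dest: injD)
  qed
  then have "bij q" using finite_UNIV_inj_surj[of q] by (simp add: bij_def)
  then have "q permutes UNIV" by (simp add: permutes_altdef)
  then show ?thesis using pl by blast
qed

lemma inj_liftp: "inj_on (liftp i) (X :: ('n \<Rightarrow> 'n) set)"
proof
  fix q q' assume "q \<in> X" "q' \<in> X" "liftp i q = liftp i q'"
  then have "liftp i q (i, k) = liftp i q' (i, k)" for k by simp
  then show "q = q'" unfolding liftp_def by (auto simp: fun_eq_iff)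
qed

lemma det_Emat: "det (Emat (i::'m::finite) S :: complex^('m \<times> 'n::finite)^('m \<times> 'n)) = det S"
proof -
  let ?f = "\<lambda>p. of_int (sign p) * (\<Prod>x\<in>UNIV. Emat i S $ x $ p x)"
  let ?P = "{p. p permutes (UNIV :: ('m \<times> 'n) set)}"
  let ?Q = "{q. q permutes (UNIV :: 'n set)}"
  have sub: "liftp i ` ?Q \<subseteq> ?P" using liftp_perm by blast
  have "det (Emat i S :: complex^('m \<times> 'n)^('m \<times> 'n)) = sum ?f ?P" unfolding det_def by simp
  also have "\<dots> = sum ?f (liftp i ` ?Q)"
  proof (rule sum.mono_neutral_right)
    show "finite ?P" by (simp add: finite_permutations)
    show "liftp i ` ?Q \<subseteq> ?P" by (rule sub)
    show "\<forall>p\<in>?P - liftp i ` ?Q. ?f p = 0"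
      using Emat_nonzero_lift by fastforce
  qed
  also have "\<dots> = sum (?f \<circ> liftp i) ?Q"
    by (rule sum.reindex) (rule inj_liftp)
  also have "\<dots> = det S" unfolding det_def
    by (intro sum.cong refl) (simp add: sign_liftp Emat_prod_lift)
  finally show ?thesis .
qed



definition Pmat :: "'m set \<Rightarrow> complex^'n^'n \<Rightarrow> complex^('m::finite \<times> 'n::finite)^('m \<times> 'n)" where
  "Pmat F S = (\<chi> x y. if fst x = fst y then (if fst x \<in> F then S $ snd x $ snd y
                        else (if snd x = snd y then 1 else 0)) else 0)"

lemma Pmat_empty: "Pmat {} S = mat 1"
  unfolding Pmat_def by (auto simp: vec_eq_iff mat_def prod_eq_iff)

lemma Pmat_UNIV: "Pmat UNIV S = kron1 S"
  unfolding Pmat_def kron1_def by (auto simp: vec_eq_iff)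

lemma sum_delta_mult:
  fixes f :: "'b::finite \<Rightarrow> 'a::comm_ring_1"
  shows "(\<Sum>l\<in>UNIV. f l * (if l = a then 1 else 0)) = f a"
proof -
  have "(\<Sum>l\<in>UNIV. f l * (if l = a then 1 else 0)) = (\<Sum>l\<in>UNIV. if l = a then f l else 0)"
    by (intro sum.cong) auto
  also have "\<dots> = f a" by (simp add: sum.delta)
  finally show ?thesis .
qed

lemma sum_delta_mult':
  fixes f :: "'b::finite \<Rightarrow> 'a::comm_ring_1"
  shows "(\<Sum>l\<in>UNIV. (if l = a then 1 else 0) * f l) = f a"
  using sum_delta_mult[of f a] by (simp add: mult.commute)

lemma Pmat_insert_entry1:
  fixes S :: "complex^'n::finite^'n"
  assumes "i \<notin> F" "fst x = i"
  shows "Emat i S $ x $ z * Pmat F S $ z $ y =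
    (if fst z = i then S $ snd x $ snd z * (if i = fst y then (if snd z = snd y then 1 else 0) else 0) else 0)"
proof (cases "fst z = i")
  case True
  then show ?thesis using assms by (auto simp: Emat_def Pmat_def)
next
  case False
  then have "x \<noteq> z" using assms by auto
  then show ?thesis using assms False by (simp add: Emat_def)
qed

lemma Pmat_insert:
  fixes S :: "complex^'n::finite^'n"
  assumes "i \<notin> F"
  shows "(Pmat (insert i F) S :: complex^('m::finite \<times> 'n)^('m \<times> 'n)) = Emat i S ** Pmat F S"
proof -
  have "(Emat i S ** Pmat F S :: complex^('m \<times> 'n)^('m \<times> 'n)) $ x $ y = Pmat (insert i F) S $ x $ y" for x y
  proof (cases "fst x = i")
    case True
    have "(Emat i S ** Pmat F S :: complex^('m \<times> 'n)^('m \<times> 'n)) $ x $ y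
       = (\<Sum>z\<in>UNIV. if fst z = i then S $ snd x $ snd z * (if i = fst y then (if snd z = snd y then 1 else 0) else 0) else 0)"
      unfolding matrix_matrix_mult_def using Pmat_insert_entry1[OF assms True]
      by simp
    also have "\<dots> = (\<Sum>l\<in>UNIV. S $ snd x $ l * (if i = fst y then (if l = snd y then 1 else 0) else 0))"
      by (rule sum_delta_fst)
    also have "\<dots> = Pmat (insert i F) S $ x $ y"
    proof (cases "fst y = i")
      case True
      then show ?thesis using \<open>fst x = i\<close> by (simp add: Pmat_def sum_delta_mult)
    next
      case False
      then show ?thesis using \<open>fst x = i\<close> by (simp add: Pmat_def)
    qed
    finally show ?thesis .
  next
    case False
    have E: "Emat i S $ x $ z = (if z = x then 1 else 0)" for z
      using False by (auto simp: Emat_def)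
    have "(Emat i S ** Pmat F S :: complex^('m \<times> 'n)^('m \<times> 'n)) $ x $ y = Pmat F S $ x $ y"
      by (simp add: matrix_matrix_mult_def E sum_delta_mult')
    also have "\<dots> = Pmat (insert i F) S $ x $ y"
      using False by (simp add: Pmat_def)
    finally show ?thesis .
  qed
  then show ?thesis by (simp add: vec_eq_iff)
qed

lemma det_Pmat:
  fixes S :: "complex^'n::finite^'n"
  shows "det (Pmat F S :: complex^('m::finite \<times> 'n)^('m \<times> 'n)) = det S ^ card F"
proof -
  have "finite F" by simp
  then show ?thesis
  proof (induction F rule: finite_induct)
    case empty
    then show ?case by (simp add: Pmat_empty)
  next
    case (insert i F)
    then show ?case by (simp add: Pmat_insert det_mul det_Emat)
  qed
qed

lemma det_kron1:
  fixes S :: "complex^'n::finite^'n"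
  shows "det (kron1 S :: complex^('m::finite \<times> 'n)^('m \<times> 'n)) = det S ^ CARD('m)"
  using det_Pmat[of UNIV S] by (simp add: Pmat_UNIV)



definition swapm :: "complex^('m::finite \<times> 'n::finite)^('m \<times> 'n) \<Rightarrow> complex^('n \<times> 'm)^('n \<times> 'm)" where
  "swapm A = (\<chi> x y. A $ prod.swap x $ prod.swap y)"

lemma sum_prod_swap: "(\<Sum>x\<in>UNIV. f (prod.swap x)) = (\<Sum>y\<in>UNIV. f y)"
  by (rule sum.reindex_bij_witness[of _ prod.swap prod.swap]) auto

lemma prod_prod_swap: "(\<Prod>x\<in>UNIV. f (prod.swap x)) = (\<Prod>y\<in>UNIV. f y)"
  by (rule prod.reindex_bij_witness[of _ prod.swap prod.swap]) auto

lemma ptrace1_swapm: "ptrace1 (swapm A) = ptrace2 A"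
  unfolding ptrace1_def ptrace2_def swapm_def by simp

lemma trace_swapm: "trace (swapm A) = trace A"
  unfolding trace_def swapm_def by (simp add: sum_prod_swap[of "\<lambda>y. A $ y $ y"])

lemma psd_swapm:
  assumes "psd_mat A"
  shows "psd_mat (swapm A)"
proof -
  have "hermitian_mat (swapm A)"
    using assms unfolding psd_mat_def hermitian_mat_def swapm_def vec_lambda_beta by blast
  moreover have "0 \<le> sesq (swapm A) v v" for v
  proof -
    define w where "w = (\<chi> y. v $ prod.swap y)"
    have "sesq (swapm A) v v = (\<Sum>x\<in>UNIV. \<Sum>y\<in>UNIV. cnj (w $ prod.swap x) * A $ prod.swap x $ prod.swap y * w $ prod.swap y)"
      unfolding sesq_def swapm_def w_def by simp
    also have "\<dots> = (\<Sum>x\<in>UNIV. \<Sum>y\<in>UNIV. cnj (w $ prod.swap x) * A $ prod.swap x $ y * w $ y)"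
    proof (rule sum.cong[OF refl])
      fix x
      show "(\<Sum>y\<in>UNIV. cnj (w $ prod.swap x) * A $ prod.swap x $ prod.swap y * w $ prod.swap y) =
            (\<Sum>y\<in>UNIV. cnj (w $ prod.swap x) * A $ prod.swap x $ y * w $ y)"
        by (rule sum_prod_swap[of "\<lambda>y. cnj (w $ prod.swap x) * A $ prod.swap x $ y * w $ y"])
    qed
    also have "\<dots> = sesq A w w"
      unfolding sesq_def by (rule sum_prod_swap[of "\<lambda>x. \<Sum>y\<in>UNIV. cnj (w $ x) * A $ x $ y * w $ y"])
    finally show ?thesis using assms by (simp add: psd_sesq)
  qed
  ultimately show ?thesis by (simp add: psd_sesq)
qed

definition cswap :: "('m \<times> 'n \<Rightarrow> 'm \<times> 'n) \<Rightarrow> ('n \<times> 'm \<Rightarrow> 'n \<times> 'm)" where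
  "cswap p = prod.swap \<circ> p \<circ> prod.swap"

lemma cswap_comp: "cswap (p \<circ> q) = cswap p \<circ> cswap q"
  unfolding cswap_def by (auto simp: fun_eq_iff)

lemma cswap_cswap: "cswap' (cswap p) = p" if "cswap' = (\<lambda>p. prod.swap \<circ> p \<circ> prod.swap)"
  unfolding cswap_def that by (auto simp: fun_eq_iff)

lemma cswap_transpose: "cswap (Transposition.transpose a b) = Transposition.transpose (prod.swap a) (prod.swap b)"
proof -
  have "(prod.swap \<circ> Transposition.transpose a b \<circ> prod.swap) x = Transposition.transpose (prod.swap a) (prod.swap b) x" for x
  proof -
    have e1: "(prod.swap x = a) = (x = prod.swap a)" by auto
    have e2: "(prod.swap x = b) = (x = prod.swap b)" by auto
    show ?thesis by (simp add: Transposition.transpose_def e1 e2)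
  qed
  then show ?thesis unfolding cswap_def by (simp add: fun_eq_iff)
qed

lemma cswap_perm: "p permutes UNIV \<Longrightarrow> cswap p permutes UNIV"
  unfolding cswap_def permutes_altdef
  by (auto intro!: bij_comp)

lemma sign_cswap:
  assumes "p permutes (UNIV::('m::finite \<times> 'n::finite) set)"
  shows "sign (cswap p) = sign p"
proof -
  have fin: "finite (UNIV::('m \<times> 'n) set)" by simp
  show ?thesis using assms fin
  proof (induction rule: permutes_induct)
    case id
    have c: "cswap id = id" unfolding cswap_def by (auto simp: fun_eq_iff)
    show ?case by (simp only: c sign_id)
  next
    case (swap a b p)
    have pl: "permutation (cswap p)"
      using cswap_perm[OF swap(4)] by (auto simp: permutation_permutes)
    have pp: "permutation p" using swap(4) by (auto simp: permutation_permutes)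
    have ne: "prod.swap a \<noteq> prod.swap b" using swap(3) by (metis swap_swap)
    have "sign (cswap (Transposition.transpose a b \<circ> p))
        = sign (Transposition.transpose (prod.swap a) (prod.swap b) \<circ> cswap p)"
      by (simp add: cswap_comp cswap_transpose)
    also have "\<dots> = - sign (cswap p)"
      using ne by (simp add: sign_compose pl permutation_swap_id sign_swap_id)
    also have "\<dots> = sign (Transposition.transpose a b \<circ> p)"
      using swap(3,5) by (simp add: sign_compose pp permutation_swap_id sign_swap_id)
    finally show ?case .
  qed
qed

lemma det_swapm:
  fixes A :: "complex^('m::finite \<times> 'n::finite)^('m \<times> 'n)"
  shows "det (swapm A) = det A"
proof -
  let ?Q = "{p. p permutes (UNIV :: ('m \<times> 'n) set)}"
  let ?P = "{p. p permutes (UNIV :: ('n \<times> 'm) set)}"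
  let ?g = "\<lambda>p. of_int (sign p) * (\<Prod>x\<in>UNIV. A $ x $ p x)"
  let ?h = "\<lambda>p. of_int (sign p) * (\<Prod>y\<in>UNIV. swapm A $ y $ p y)"
  have f1: "prod.swap \<circ> cswap p \<circ> prod.swap = p" for p :: "'m \<times> 'n \<Rightarrow> 'm \<times> 'n"
    unfolding cswap_def by (auto simp: fun_eq_iff)
  have f2: "cswap p \<in> ?P" if "p \<in> ?Q" for p using that cswap_perm by blast
  have f3: "cswap (prod.swap \<circ> p \<circ> prod.swap) = p" for p :: "'n \<times> 'm \<Rightarrow> 'n \<times> 'm"
    unfolding cswap_def by (auto simp: fun_eq_iff)
  have f4: "prod.swap \<circ> p \<circ> prod.swap \<in> ?Q" if "p \<in> ?P" for p :: "'n \<times> 'm \<Rightarrow> 'n \<times> 'm"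
  proof -
    have "bij (prod.swap \<circ> p \<circ> prod.swap)"
      using that unfolding permutes_altdef by (auto intro!: bij_comp)
    then show ?thesis by (simp add: permutes_altdef)
  qed
  have f5: "?h (cswap p) = ?g p" if p: "p \<in> ?Q" for p
  proof -
    have "(\<Prod>y\<in>UNIV. swapm A $ y $ cswap p y) = (\<Prod>y\<in>UNIV. A $ prod.swap y $ p (prod.swap y))"
      unfolding swapm_def cswap_def by simp
    also have "\<dots> = (\<Prod>x\<in>UNIV. A $ x $ p x)"
      by (rule prod_prod_swap[of "\<lambda>x. A $ x $ p x"])
    moreover have "sign (cswap p) = sign p" using p by (simp add: sign_cswap)
    ultimately show ?thesis by simp
  qed
  have "det A = sum ?g ?Q" unfolding det_def by simp
  also have "\<dots> = sum ?h ?P"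
    by (rule sum.reindex_bij_witness[of _ "\<lambda>p. prod.swap \<circ> p \<circ> prod.swap" cswap]) (use f1 f2 f3 f4 f5 in auto)
  also have "\<dots> = det (swapm A)" unfolding det_def by simp
  finally show ?thesis by simp
qed



lemma side1:
  fixes A :: "complex^('m::finite \<times> 'n::finite)^('m \<times> 'n)"
  assumes psd: "psd_mat A"
  obtains dA dS :: real where "det A = of_real dA" "det (ptrace1 A) = of_real dS" "0 \<le> dA" "0 \<le> dS"
    "real CARD('m) ^ (CARD('m) * CARD('n)) * dA \<le> dS ^ CARD('m)"
proof -
  let ?S = "ptrace1 A"
  let ?m = "CARD('m)"
  let ?n = "CARD('n)"
  have psdS: "psd_mat ?S" using psd by (rule psd_ptrace1)
  obtain dA where dA: "det A = of_real dA" "0 \<le> dA"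
    using psd_eig_amgm[OF psd] by metis
  obtain dS where dS: "det ?S = of_real dS" "0 \<le> dS"
    using psd_eig_amgm[OF psdS] by metis
  have m1: "?m \<ge> 1" and n1: "?n \<ge> 1" by (simp_all add: Suc_leI)
  have key: "real ?m ^ (?m * ?n) * dA \<le> dS ^ ?m"
  proof (cases "dS = 0")
    case True
    then have "det ?S = 0" using dS by simp
    then obtain v where v: "v \<noteq> 0" "?S *v v = 0" using det_kernel by blast
    have "sesq ?S v v = 0" unfolding sesq_mv v(2) by simp
    then have sum0: "(\<Sum>i\<in>UNIV. sesq A (emb i v) (emb i v)) = 0" by (simp add: sesq_ptrace1)
    have nn: "\<forall>i\<in>UNIV. 0 \<le> sesq A (emb i v) (emb i v)" using psd by (simp add: psd_sesq)
    have z: "sesq A (emb i v) (emb i v) = 0" for i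
      using sum_nonneg_eq_0_iff[of UNIV "\<lambda>i. sesq A (emb i v) (emb i v)"] sum0 nn by simp
    have "A *v emb undefined v = 0" using psd_kernel[OF psd z] .
    moreover have "emb undefined v \<noteq> 0" using emb_zero v(1) by blast
    ultimately have "det A = 0" using det_kernel by blast
    then have "dA = 0" using dA by simp
    then show ?thesis using True m1 by simp
  next
    case False
    then have dSnz: "det ?S \<noteq> 0" using dS by simp
    then have "invertible ?S" by (simp add: invertible_det_nz)
    then obtain S' where S': "?S ** S' = mat 1" "S' ** ?S = mat 1" unfolding invertible_def by blast
    define T where "T = (kron1 ?S :: complex^('m \<times> 'n)^('m \<times> 'n))"
    define T' where "T' = (kron1 S' :: complex^('m \<times> 'n)^('m \<times> 'n))"
    have TT': "T ** T' = mat 1" unfolding T_def T'_def kron1_mult S'(1) kron1_one ..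
    define M where "M = T' ** A"
    have ev: "a \<in> \<real> \<and> 0 \<le> Re a" if v: "v \<noteq> 0" "M *v v = a *s v" for a v
    proof -
      have Av: "A *v v = a *s (T *v v)"
      proof -
        have "A *v v = (T ** T') ** A *v v" by (simp add: TT')
        also have "\<dots> = T *v (M *v v)" by (simp add: M_def matrix_vector_mul_assoc matrix_mul_assoc)
        also have "\<dots> = a *s (T *v v)" using v(2) by (simp add: vector_scalar_commute)
        finally show ?thesis .
      qed
      define r where "r = (\<Sum>i\<in>UNIV. Re (sesq ?S (blk v i) (blk v i)))"
      have nnS: "0 \<le> sesq ?S x x" for x using psdS by (simp add: psd_sesq)
      have reS: "sesq ?S x x = of_real (Re (sesq ?S x x))" for x
        using nnS[of x] by (simp add: less_eq_complex_def complex_eq_iff)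
      have sT: "sesq T v v = of_real r"
      proof -
        have "sesq T v v = (\<Sum>i\<in>UNIV. sesq ?S (blk v i) (blk v i))" unfolding T_def by (rule sesq_kron1)
        also have "\<dots> = (\<Sum>i\<in>UNIV. of_real (Re (sesq ?S (blk v i) (blk v i))))"
          by (intro sum.cong refl) (rule reS)
        finally show ?thesis unfolding r_def by simp
      qed
      have r0: "\<forall>i\<in>UNIV. 0 \<le> Re (sesq ?S (blk v i) (blk v i))"
        using nnS by (simp add: less_eq_complex_def)
      have "r \<noteq> 0"
      proof
        assume "r = 0"
        then have "\<forall>i\<in>UNIV. Re (sesq ?S (blk v i) (blk v i)) = 0"
          using sum_nonneg_eq_0_iff[of UNIV "\<lambda>i. Re (sesq ?S (blk v i) (blk v i))"] r0
          unfolding r_def by simp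
        then have "sesq ?S (blk v i) (blk v i) = 0" for i using reS[of "blk v i"] by simp
        then have "?S *v blk v i = 0" for i using psd_kernel[OF psdS] by blast
        then have "blk v i = 0" for i using dSnz det_kernel by blast
        then have "v = 0" by (rule blk_zero)
        then show False using v(1) by simp
      qed
      moreover have "0 \<le> r" unfolding r_def using r0 by (intro sum_nonneg) auto
      ultimately have rp: "0 < r" by simp
      have "0 \<le> sesq A v v" using psd by (simp add: psd_sesq)
      then show ?thesis using gen_eig_nonneg[of A v T r a] sT rp Av by blast
    qed
    obtain d t where dt: "det M = of_real d" "trace M = of_real t" "0 \<le> d" "0 \<le> t"
      "real CARD('m \<times> 'n) ^ CARD('m \<times> 'n) * d \<le> t ^ CARD('m \<times> 'n)"
      using eig_amgm[of M] ev by metis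
    have "trace M = trace (S' ** ?S)" unfolding M_def T'_def by (rule trace_kron1)
    also have "\<dots> = of_nat ?n" by (simp add: S'(2) trace_I)
    finally have "of_real t = (of_nat ?n :: complex)" using dt(2) by simp
    then have tn: "t = real ?n" by (metis of_real_eq_iff of_real_of_nat_eq)
    have dS': "det S' * det ?S = 1" using S'(2) det_mul[of S' ?S] by simp
    have "det M = det S' ^ ?m * det A" unfolding M_def T'_def by (simp add: det_mul det_kron1)
    then have "det M * det ?S ^ ?m = (det S' * det ?S) ^ ?m * det A"
      by (simp add: power_mult_distrib mult_ac)
    then have "det M * det ?S ^ ?m = det A" using dS' by simp
    then have ddA: "d * dS ^ ?m = dA" using dt(1) dS(1) dA(1)
      by (metis of_real_eq_iff of_real_mult of_real_power)
    have h1: "real ?n ^ (?m * ?n) * (real ?m ^ (?m * ?n) * d) \<le> real ?n ^ (?m * ?n) * 1"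
      using dt(5) tn by (simp add: card_prod power_mult_distrib mult_ac)
    have h2: "real ?m ^ (?m * ?n) * d \<le> 1"
      using h1 by (simp add: mult_le_cancel_left_pos)
    have "real ?m ^ (?m * ?n) * dA = (real ?m ^ (?m * ?n) * d) * dS ^ ?m"
      using ddA by (simp add: mult_ac)
    also have "\<dots> \<le> 1 * dS ^ ?m"
      using h2 dS(2) by (intro mult_right_mono) simp_all
    finally show ?thesis by simp
  qed
  show ?thesis using that dA dS key by blast
qed

lemma of_real_le_complex: "(of_real x \<le> (of_real y :: complex)) \<longleftrightarrow> x \<le> y"
  by (simp add: less_eq_complex_def)

theorem theorem4p7:
  fixes A :: "complex^('m::finite \<times> 'n::finite)^('m \<times> 'n)"
  assumes "psd_mat A"
  shows "trace A ^ (CARD('m) * CARD('n)) + det (ptrace1 A) ^ CARD('m)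
           \<ge> of_nat CARD('m) ^ (CARD('m) * CARD('n)) * (det A + det (ptrace2 A) ^ CARD('n))
         \<and> trace A ^ (CARD('m) * CARD('n)) + det (ptrace2 A) ^ CARD('n)
           \<ge> of_nat CARD('n) ^ (CARD('m) * CARD('n)) * (det A + det (ptrace1 A) ^ CARD('m))"
proof -
  let ?m = "CARD('m)"
  let ?n = "CARD('n)"
  obtain dA d1 where s1: "det A = of_real dA" "det (ptrace1 A) = of_real d1" "0 \<le> dA" "0 \<le> d1"
    "real ?m ^ (?m * ?n) * dA \<le> d1 ^ ?m"
    using side1[OF assms] by metis
  have psd2: "psd_mat (swapm A)" using assms by (rule psd_swapm)
  obtain dA' d2 where s2: "det (swapm A) = of_real dA'" "det (ptrace1 (swapm A)) = of_real d2"
    "0 \<le> dA'" "0 \<le> d2" "real ?n ^ (?n * ?m) * dA' \<le> d2 ^ ?n"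
    using side1[OF psd2] by metis
  have "dA' = dA" using s2(1) s1(1) det_swapm[of A] by simp
  have p2: "det (ptrace2 A) = of_real d2" using s2(2) ptrace1_swapm[of A] by simp
  obtain d1' t where e1: "det (ptrace1 A) = of_real d1'" "trace (ptrace1 A) = of_real t" "0 \<le> t"
    "real ?n ^ ?n * d1' \<le> t ^ ?n"
    using psd_eig_amgm[OF psd_ptrace1[OF assms]] by metis
  obtain d2' t' where e2: "det (ptrace1 (swapm A)) = of_real d2'" "trace (ptrace1 (swapm A)) = of_real t'"
    "0 \<le> t'" "real ?m ^ ?m * d2' \<le> t' ^ ?m"
    using psd_eig_amgm[OF psd_ptrace1[OF psd2]] by metis
  have "d1' = d1" using e1(1) s1(2) by simp
  have "d2' = d2" using e2(1) s2(2) by simp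
  have tA: "trace A = of_real t" using e1(2) trace_ptrace1[of A] by simp
  have "t' = t" using e2(2) trace_ptrace1[of "swapm A"] trace_swapm[of A] tA by simp
  have i1: "real ?m ^ (?m * ?n) * d2 ^ ?n \<le> t ^ (?m * ?n)"
  proof -
    have "real ?m ^ (?m * ?n) * d2 ^ ?n = (real ?m ^ ?m * d2) ^ ?n"
      by (simp add: power_mult power_mult_distrib)
    also have "\<dots> \<le> (t ^ ?m) ^ ?n"
      using e2(4) \<open>d2' = d2\<close> \<open>t' = t\<close> s2(4) by (intro power_mono) simp_all
    also have "\<dots> = t ^ (?m * ?n)" by (simp add: power_mult)
    finally show ?thesis .
  qed
  have i2: "real ?n ^ (?m * ?n) * d1 ^ ?m \<le> t ^ (?m * ?n)"
  proof -
    have pn: "real ?n ^ (?m * ?n) = (real ?n ^ ?n) ^ ?m"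
      by (metis power_mult mult.commute)
    have "real ?n ^ (?m * ?n) * d1 ^ ?m = (real ?n ^ ?n * d1) ^ ?m"
      unfolding pn by (simp add: power_mult_distrib)
    also have "\<dots> \<le> (t ^ ?n) ^ ?m"
      using e1(4) \<open>d1' = d1\<close> s1(4) by (intro power_mono) simp_all
    also have "\<dots> = t ^ (?m * ?n)" by (metis power_mult mult.commute)
    finally show ?thesis .
  qed
  have i3: "real ?n ^ (?m * ?n) * dA \<le> d2 ^ ?n"
    using s2(5) \<open>dA' = dA\<close> by (simp add: mult.commute)
  have g1: "real ?m ^ (?m * ?n) * (dA + d2 ^ ?n) \<le> t ^ (?m * ?n) + d1 ^ ?m"
    using s1(5) i1 by (simp add: distrib_left)
  have g2: "real ?n ^ (?m * ?n) * (dA + d1 ^ ?m) \<le> t ^ (?m * ?n) + d2 ^ ?n"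
    using i2 i3 by (simp add: distrib_left)
  have c1: "trace A ^ (?m * ?n) + det (ptrace1 A) ^ ?m = of_real (t ^ (?m * ?n) + d1 ^ ?m)"
    using tA s1(2) by simp
  have c2: "trace A ^ (?m * ?n) + det (ptrace2 A) ^ ?n = of_real (t ^ (?m * ?n) + d2 ^ ?n)"
    using tA p2 by simp
  have c3: "of_nat ?m ^ (?m * ?n) * (det A + det (ptrace2 A) ^ ?n) = (of_real (real ?m ^ (?m * ?n) * (dA + d2 ^ ?n)) :: complex)"
    using s1(1) p2 by simp
  have c4: "of_nat ?n ^ (?m * ?n) * (det A + det (ptrace1 A) ^ ?m) = (of_real (real ?n ^ (?m * ?n) * (dA + d1 ^ ?m)) :: complex)"
    using s1(1,2) by simp
  show ?thesis unfolding c1 c2 c3 c4 of_real_le_complex using g1 g2 by simp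
qed

end
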